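(* Let $D=\mathrm{diag}(1,-1,1,-1,\ldots)=(1,-x)$, let $P=\bigl[\binom{i}{j}\bigr]_{i,j\ge 0}=\bigl(\tfrac{1}{1-x},\tfrac{x}{1-x}\bigr)$ be the Pascal matrix, and let $\mathbb{F}^{\rm S}=(1,x(1+x))$ and $\mathbb{L}^{\rm S}=(1+2x,x(1+x))$. Let $C(x)=\frac{1-\sqrt{1-4x}}{2x}$, $M(x)=\frac{1-x-\sqrt{(1-x)^2-4x^2}}{2x^2}$ and $W(x)=\sum_{n\ge0}\binom{2n}{n}x^n$. Then: (a) $D(\mathbb{F}^{\rm S})^{-1}D=(1,xC(x))=P\left(\frac{M(x)-xM(x)-x^2M(x)^2}{1+x},\frac{x+x^2M(x)}{1+x}\right)$; (b) $D(\mathbb{L}^{\rm S})^{-1}D=\left(\frac{1}{1-2xC(x)},xC(x)\right)=(W(x),x)\,P\left(\frac{M(x)-xM(x)-x^2M(x)^2}{1+x},\frac{x+x^2M(x)}{1+x}\right)$; (c) $D(\mathbb{L}^{\rm S})^{-1}D=\left(\frac{1}{1-2xC(x)},x\right)D(\mathbb{F}^{\rm S})^{-1}D=(W(x),x)\,D(\mathbb{F}^{\rm S})^{-1}D=D(\mathbb{F}^{\rm S})^{-1}D\left(\frac{1}{1-2x},x\right)$.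
   Context: All matrices are infinite with rows and columns indexed by $0,1,2,\ldots$. For formal power series $g(x)=g_0+g_1x+\cdots$ and $f(x)=f_1x+f_2x^2+\cdots$, $(g(x),f(x))$ denotes the infinite lower triangular matrix whose $j$-th column ($j=0,1,\ldots$) has generating function $g(x)f(x)^j$; it is a Riordan matrix when $g_0\neq0$ and $f_1\neq0$. Riordan matrices form a group under matrix multiplication, with $(g(x),f(x))(h(x),l(x))=(g(x)h(f(x)),l(f(x)))$ and $(g(x),f(x))^{-1}=(1/g(\bar f(x)),\bar f(x))$, where $\bar f$ is the compositional inverse of $f$. *)

theory Defs
  imports Complex_Main "HOL-Computational_Algebra.Formal_Power_Series"
begin

type_synonym mat = "nat \<Rightarrow> nat \<Rightarrow> real"

definition riordan :: "real fps \<Rightarrow> real fps \<Rightarrow> mat" where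
  "riordan g f i j = fps_nth (g * f ^ j) i"

text \<open>Product of infinite matrices whose left factor is lower triangular
  (all factors occurring below are): entries with k > i vanish.\<close>
definition mmult :: "mat \<Rightarrow> mat \<Rightarrow> mat" where
  "mmult A B i j = (\<Sum>k\<le>i. A i k * B k j)"

definition mat_id :: mat where
  "mat_id i j = (if i = j then 1 else 0)"

definition lower_tri :: "mat \<Rightarrow> bool" where
  "lower_tri A \<longleftrightarrow> (\<forall>i j. i < j \<longrightarrow> A i j = 0)"

text \<open>Matrix inverse of an infinite lower triangular matrix (with nonzero diagonal,
  the inverse exists, is unique and lower triangular).\<close>
definition minv :: "mat \<Rightarrow> mat" where
  "minv A = (THE B. lower_tri B \<and> mmult A B = mat_id)"

text \<open>Formal square root with constant term sqrt(a_0).\<close>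
definition fps_sqrt :: "real fps \<Rightarrow> real fps" where
  "fps_sqrt a = fps_radical (\<lambda>k x. root k x) 2 a"

definition Dmat :: mat where "Dmat = riordan 1 (- fps_X)"
definition Pascal :: mat where "Pascal = riordan (1 / (1 - fps_X)) (fps_X / (1 - fps_X))"
definition FS :: mat where "FS = riordan 1 (fps_X * (1 + fps_X))"
definition LS :: mat where "LS = riordan (1 + 2 * fps_X) (fps_X * (1 + fps_X))"

definition Cfps :: "real fps" where
  "Cfps = (1 - fps_sqrt (1 - 4 * fps_X)) / (2 * fps_X)"
definition Mfps :: "real fps" where
  "Mfps = (1 - fps_X - fps_sqrt ((1 - fps_X)^2 - 4 * fps_X^2)) / (2 * fps_X^2)"
definition Wfps :: "real fps" where
  "Wfps = Abs_fps (\<lambda>n. of_nat ((2*n) choose n))"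

end

theory Submission
  imports Defs
begin
unbundle fps_syntax

lemma pow_nth_below: "f$0 = (0::real) \<Longrightarrow> n < k \<Longrightarrow> (f^k)$n = 0"
  using startsby_zero_power_prefix by blast

lemma riordan_lower: "f$0 = 0 \<Longrightarrow> lower_tri (riordan g f)"
  unfolding lower_tri_def riordan_def
  by (auto simp: fps_mult_nth pow_nth_below intro!: sum.neutral)

lemma mmult_riordan:
  fixes g f h l :: "real fps" assumes f0: "f$0 = 0"
  shows "mmult (riordan g f) (riordan h l) = riordan (g * (h oo f)) (l oo f)"
proof (intro ext)
  fix i j
  define c where "c = h * l^j"
  have comp: "(h oo f) * (l oo f)^j = c oo f"
    by (simp add: c_def fps_compose_mult_distrib[OF f0] fps_compose_power[OF f0])
  have "riordan (g*(h oo f)) (l oo f) i j = (g * (c oo f))$i"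
    by (simp add: riordan_def comp[symmetric] mult.assoc)
  also have "\<dots> = (\<Sum>m=0..i. g$m * (\<Sum>k=0..i-m. c$k * (f^k)$(i-m)))"
    by (simp add: fps_mult_nth fps_compose_nth)
  also have "\<dots> = (\<Sum>m=0..i. g$m * (\<Sum>k=0..i. c$k * (f^k)$(i-m)))"
  proof (rule sum.cong[OF refl])
    fix m assume m: "m \<in> {0..i}"
    have "(\<Sum>k=0..i. c$k * (f^k)$(i-m)) = (\<Sum>k=0..i-m. c$k * (f^k)$(i-m))"
      by (rule sum.mono_neutral_right) (auto simp: pow_nth_below[OF f0])
    thus "g$m * (\<Sum>k=0..i-m. c$k * (f^k)$(i-m)) = g$m * (\<Sum>k=0..i. c$k * (f^k)$(i-m))"
      by simp
  qed
  also have "\<dots> = (\<Sum>m=0..i. \<Sum>k=0..i. g$m * (c$k * (f^k)$(i-m)))"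
    by (simp add: sum_distrib_left)
  also have "\<dots> = (\<Sum>k=0..i. \<Sum>m=0..i. g$m * (c$k * (f^k)$(i-m)))"
    by (rule sum.swap)
  also have "\<dots> = (\<Sum>k\<le>i. (g*f^k)$i * c$k)"
    by (simp add: fps_mult_nth atLeast0AtMost sum_distrib_left sum_distrib_right mult_ac)
  also have "\<dots> = mmult (riordan g f) (riordan h l) i j"
    by (simp add: mmult_def riordan_def c_def)
  finally show "mmult (riordan g f) (riordan h l) i j = riordan (g * (h oo f)) (l oo f) i j"
    by simp
qed

lemma riordan_id: "riordan 1 fps_X = mat_id"
  by (auto simp: riordan_def mat_id_def fun_eq_iff)

lemma mmult_assoc: "lower_tri A \<Longrightarrow> mmult (mmult L A) B = mmult L (mmult A B)"
proof (intro ext)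
  fix i j assume A: "lower_tri A"
  have "mmult (mmult L A) B i j = (\<Sum>k\<le>i. \<Sum>m\<le>i. L i m * A m k * B k j)"
    by (simp add: mmult_def sum_distrib_right)
  also have "\<dots> = (\<Sum>m\<le>i. \<Sum>k\<le>i. L i m * A m k * B k j)" by (rule sum.swap)
  also have "\<dots> = (\<Sum>m\<le>i. \<Sum>k\<le>m. L i m * A m k * B k j)"
  proof (rule sum.cong[OF refl])
    fix m assume "m \<in> {..i}"
    thus "(\<Sum>k\<le>i. L i m * A m k * B k j) = (\<Sum>k\<le>m. L i m * A m k * B k j)"
      using A by (intro sum.mono_neutral_right) (auto simp: lower_tri_def)
  qed
  also have "\<dots> = mmult L (mmult A B) i j"
    by (simp add: mmult_def sum_distrib_left mult_ac)
  finally show "mmult (mmult L A) B i j = mmult L (mmult A B) i j" .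
qed

lemma mmult_id_left: "mmult mat_id B = B"
proof (intro ext)
  fix i j
  have "mmult mat_id B i j = (\<Sum>k\<le>i. if i = k then B k j else 0)"
    unfolding mmult_def mat_id_def by (rule sum.cong) auto
  also have "\<dots> = B i j" by (simp add: sum.delta)
  finally show "mmult mat_id B i j = B i j" .
qed

lemma mmult_id_right: "lower_tri B \<Longrightarrow> mmult B mat_id = B"
proof (intro ext)
  fix i j assume B: "lower_tri B"
  have "mmult B mat_id i j = (\<Sum>k\<le>i. if k = j then B i k else 0)"
    unfolding mmult_def mat_id_def by (rule sum.cong) auto
  also have "\<dots> = B i j" using B by (simp add: sum.delta' lower_tri_def)
  finally show "mmult B mat_id i j = B i j" .
qed

lemma minv_eqI:
  assumes LA: "mmult L A = mat_id" and A: "lower_tri A" and L: "lower_tri L"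
    and B0: "lower_tri B0" "mmult A B0 = mat_id"
  shows "minv A = L"
proof -
  have uniq: "B = L" if "lower_tri B" "mmult A B = mat_id" for B
  proof -
    have "B = mmult (mmult L A) B" by (simp add: LA mmult_id_left)
    also have "\<dots> = mmult L (mmult A B)" by (rule mmult_assoc[OF A])
    also have "\<dots> = L" using that L by (simp add: mmult_id_right)
    finally show ?thesis .
  qed
  have "lower_tri L \<and> mmult A L = mat_id" using uniq[OF B0] B0 by simp
  thus ?thesis unfolding minv_def using uniq by (intro the_equality) auto
qed


lemma minv_riordan:
  fixes g f s :: "real fps"
  assumes f0: "f$0 = 0" and f1: "f$1 \<noteq> 0" and g0: "g$0 \<noteq> 0" and s0: "s$0 = 0"
    and fs: "f oo s = fps_X"
  shows "minv (riordan g f) = riordan (inverse (g oo s)) s"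
proof (rule minv_eqI)
  show "mmult (riordan (inverse (g oo s)) s) (riordan g f) = mat_id"
    using inverse_mult_eq_1[of "g oo s"] g0
    by (simp add: mmult_riordan[OF s0] fs riordan_id)
  show "lower_tri (riordan g f)" by (rule riordan_lower[OF f0])
  show "lower_tri (riordan (inverse (g oo s)) s)" by (rule riordan_lower[OF s0])
  define fi where "fi = fps_inv f"
  have fi0: "fi$0 = 0" by (simp add: fi_def fps_inv_def)
  have fif: "fi oo f = fps_X" using fps_inv[OF f0 f1] by (simp add: fi_def)
  show "lower_tri (riordan (inverse (g oo fi)) fi)" by (rule riordan_lower[OF fi0])
  have "inverse (g oo fi) oo f = inverse (g oo fi oo f)"
    by (rule fps_inverse_compose) (simp_all add: f0 g0)
  also have "g oo fi oo f = g" by (simp add: fps_compose_assoc[OF f0 fi0, symmetric] fif)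
  finally show "mmult (riordan g f) (riordan (inverse (g oo fi)) fi) = mat_id"
    using inverse_mult_eq_1'[of g] g0
    by (simp add: mmult_riordan[OF f0] fif riordan_id)
qed

definition Tfps :: "real fps" where "Tfps = fps_sqrt (1 - 4 * fps_X)"
definition Sfps :: "real fps" where "Sfps = fps_sqrt ((1 - fps_X)^2 - 4 * fps_X^2)"

lemma T0: "Tfps $ 0 = 1"
  by (simp add: Tfps_def fps_sqrt_def)

lemma T2: "Tfps^2 = 1 - 4 * fps_X"
  using power_radical[of "1 - 4*fps_X" "\<lambda>k x. root k x" 1]
  by (simp add: Tfps_def fps_sqrt_def numeral_2_eq_2)

lemma S0: "Sfps $ 0 = 1"
  by (simp add: Sfps_def fps_sqrt_def power2_eq_square)

lemma S2: "Sfps^2 = (1 - fps_X)^2 - 4 * fps_X^2"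
  using power_radical[of "(1 - fps_X)^2 - 4 * fps_X^2" "\<lambda>k x. root k x" 1]
  by (simp add: Sfps_def fps_sqrt_def numeral_2_eq_2 power2_eq_square)


lemma X_nz: "(fps_X :: real fps) \<noteq> 0"
proof
  assume "(fps_X :: real fps) = 0"
  hence "(fps_X :: real fps) $ 1 = 0" by simp
  thus False by simp
qed

lemma twoX_nz: "(2::real fps) * fps_X \<noteq> 0"
  using X_nz by simp

lemma twoX2_nz: "(2::real fps) * fps_X^2 \<noteq> 0"
  using X_nz by simp

lemma C_eq: "Cfps = 2 * inverse (1 + Tfps)"
proof -
  have J: "inverse (1 + Tfps) * (1 + Tfps) = 1"
    by (rule inverse_mult_eq_1) (simp add: T0)
  have "1 - Tfps = (2 * inverse (1 + Tfps)) * (2 * fps_X)"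
    using J T2 by algebra
  hence "Cfps = ((2 * inverse (1 + Tfps)) * (2 * fps_X)) / (2 * fps_X)"
    by (simp only: Cfps_def Tfps_def[symmetric])
  also have "\<dots> = 2 * inverse (1 + Tfps)" by (rule nonzero_mult_div_cancel_right[OF twoX_nz])
  finally show ?thesis .
qed

lemma M_eq: "Mfps = 2 * inverse (1 - fps_X + Sfps)"
proof -
  have J: "inverse (1 - fps_X + Sfps) * (1 - fps_X + Sfps) = 1"
    by (rule inverse_mult_eq_1) (simp add: S0)
  have "1 - fps_X - Sfps = (2 * inverse (1 - fps_X + Sfps)) * (2 * fps_X^2)"
    using J S2 by algebra
  hence "Mfps = ((2 * inverse (1 - fps_X + Sfps)) * (2 * fps_X^2)) / (2 * fps_X^2)"
    by (simp only: Mfps_def Sfps_def[symmetric])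
  also have "\<dots> = 2 * inverse (1 - fps_X + Sfps)" by (rule nonzero_mult_div_cancel_right[OF twoX2_nz])
  finally show ?thesis .
qed

lemma cat: "fps_X * Cfps - (fps_X * Cfps)^2 = fps_X" "1 - 2 * fps_X * Cfps = Tfps"
proof -
  have J: "inverse (1 + Tfps) * (1 + Tfps) = 1"
    by (rule inverse_mult_eq_1) (simp add: T0)
  show "fps_X * Cfps - (fps_X * Cfps)^2 = fps_X" unfolding C_eq using J T2 by algebra
  show "1 - 2 * fps_X * Cfps = Tfps" unfolding C_eq using J T2 by algebra
qed

lemma C_rec: "Cfps = 1 + fps_X * Cfps^2"
proof -
  have "fps_X * (Cfps - 1 - fps_X * Cfps^2) = (fps_X * Cfps - (fps_X * Cfps)^2) - fps_X"
    by (simp add: algebra_simps power2_eq_square)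
  also have "\<dots> = 0" using cat(1) by simp
  finally have "Cfps - 1 - fps_X * Cfps^2 = 0" using X_nz by (metis mult_eq_0_iff)
  thus ?thesis by (simp add: algebra_simps)
qed

lemma M_rec: "Mfps = 1 + fps_X * Mfps + fps_X^2 * Mfps^2"
proof -
  have J: "inverse (1 - fps_X + Sfps) * (1 - fps_X + Sfps) = 1"
    by (rule inverse_mult_eq_1) (simp add: S0)
  have "fps_X^2 * (Mfps - 1 - fps_X * Mfps - fps_X^2 * Mfps^2) = 0"
    unfolding M_eq using J S2 by algebra
  hence "Mfps - 1 - fps_X * Mfps - fps_X^2 * Mfps^2 = 0" using X_nz by (metis mult_eq_0_iff power_not_zero)
  thus ?thesis by (simp add: algebra_simps)
qed


lemma binom_rec: "Suc n * ((2 * Suc n) choose Suc n) = 2 * (2*n+1) * ((2*n) choose n)"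
proof -
  have a: "Suc n * (Suc (2*n+1) choose Suc n) = Suc (2*n+1) * ((2*n+1) choose n)"
    by (rule Suc_times_binomial)
  have b: "(2*n+1) choose n = (2*n+1) choose (n+1)"
    using binomial_symmetric[of n "2*n+1"] by simp
  have c: "Suc n * (Suc (2*n) choose Suc n) = Suc (2*n) * ((2*n) choose n)"
    by (rule Suc_times_binomial)
  have "Suc n * ((2 * Suc n) choose Suc n) = Suc (2*n+1) * ((2*n+1) choose (n+1))"
    using a b by simp
  also have "\<dots> = 2 * (Suc n * (Suc (2*n) choose Suc n))" by simp
  also have "\<dots> = 2 * (2*n+1) * ((2*n) choose n)" using c by simp
  finally show ?thesis .
qed

lemma dW: "(1 - 4 * fps_X) * fps_deriv Wfps = 2 * Wfps"
proof (rule fps_ext)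
  fix n
  show "((1 - 4 * fps_X) * fps_deriv Wfps) $ n = (2 * Wfps) $ n"
  proof (cases n)
    case 0
    then show ?thesis by (simp add: Wfps_def fps_mult_nth)
  next
    case (Suc k)
    have r: "real (Suc (Suc k)) * real ((2 * Suc (Suc k)) choose Suc (Suc k))
        = 2 * (2 * real (Suc k) + 1) * real ((2 * Suc k) choose Suc k)"
      using arg_cong[OF binom_rec[of "Suc k"], of real] by (simp del: binomial_Suc_Suc mult_Suc_right add: algebra_simps)
    have rW: "real (Suc (Suc k)) * Wfps $ Suc (Suc k) = 2 * (2 * real (Suc k) + 1) * Wfps $ Suc k"
      unfolding Wfps_def fps_nth_Abs_fps using r by (simp del: binomial_Suc_Suc mult_Suc_right)
    have "(1 - 4 * fps_X) * fps_deriv Wfps = fps_deriv Wfps - fps_const 4 * (fps_X * fps_deriv Wfps)"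
      by (simp add: algebra_simps fps_numeral_fps_const)
    hence "((1 - 4 * fps_X) * fps_deriv Wfps) $ n = fps_deriv Wfps $ n - 4 * (fps_X * fps_deriv Wfps) $ n"
      by simp
    then show ?thesis using rW by (simp add: Suc algebra_simps fps_numeral_fps_const)
  qed
qed


lemma WT: "Wfps * Tfps = 1"
proof -
  have dT: "Tfps * fps_deriv Tfps = -2"
  proof -
    have "fps_deriv (Tfps^2) = fps_deriv (1 - 4*fps_X)" by (simp only: T2)
    hence "2 * (Tfps * fps_deriv Tfps) = 2 * (-2)"
      by (simp add: power2_eq_square fps_numeral_fps_const algebra_simps)
    thus ?thesis by (subst (asm) mult_left_cancel) simp_all
  qed
  have "(1 - 4*fps_X) * fps_deriv (Wfps*Tfps) = 0"
  proof -
    have "(1 - 4*fps_X) * fps_deriv (Wfps*Tfps)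
        = ((1 - 4*fps_X) * fps_deriv Wfps) * Tfps + Wfps * (Tfps^2 * fps_deriv Tfps)"
      by (simp add: T2 algebra_simps)
    also have "\<dots> = 0" using dW dT by algebra
    finally show ?thesis .
  qed
  moreover have "(1 - 4*fps_X :: real fps) \<noteq> 0"
  proof
    assume "(1 - 4*fps_X :: real fps) = 0"
    hence "(1 - 4*fps_X :: real fps) $ 0 = 0" by simp
    thus False by simp
  qed
  ultimately have "fps_deriv (Wfps*Tfps) = 0" by simp
  hence "Wfps*Tfps = fps_const ((Wfps*Tfps)$0)" using fps_deriv_eq_0_iff[of "Wfps*Tfps"] by (simp del: fps_deriv_mult fps_deriv_eq_0_iff fps_mult_nth_0)
  also have "(Wfps*Tfps)$0 = 1" by (simp add: T0 Wfps_def)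
  finally show ?thesis by simp
qed


lemma pascal_part:
  defines "G \<equiv> (Mfps - fps_X * Mfps - fps_X^2 * Mfps^2) / (1 + fps_X)"
      and "H \<equiv> (fps_X + fps_X^2 * Mfps) / (1 + fps_X)"
  shows "riordan 1 (fps_X * Cfps) = mmult Pascal (riordan G H)"
proof -
  define E where "E = inverse (1 - fps_X :: real fps)"
  have E1: "E * (1 - fps_X) = 1" unfolding E_def by (rule inverse_mult_eq_1) simp
  define p where "p = fps_X * E"
  have p0: "p$0 = 0" by (simp add: p_def)
  have Pasc: "Pascal = riordan E p" by (simp add: Pascal_def E_def p_def fps_divide_unit)
  define m where "m = Mfps oo p"
  have m_rec: "m = 1 + p*m + p^2*m^2"
    using arg_cong[OF M_rec, of "\<lambda>z. z oo p"]
    by (simp add: m_def fps_compose_add_distrib fps_compose_mult_distrib[OF p0]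
        fps_compose_power[OF p0, symmetric] p0)
  define c where "c = (1 - fps_X) * Cfps^2"
  have c_rec: "c = 1 + p*c + p^2*c^2" unfolding c_def p_def using C_rec E1 by algebra
  have "(m - c) * (1 - p - p^2*(m+c)) = 0" using m_rec c_rec by algebra
  moreover have "(1 - p - p^2*(m+c)) \<noteq> 0"
  proof
    assume "1 - p - p^2*(m+c) = 0"
    hence "(1 - p - p^2*(m+c)) $ 0 = 0" by simp
    thus False by (simp add: p0 power2_eq_square)
  qed
  ultimately have mc: "m = c" by simp
  have "inverse (1 + fps_X) oo p = inverse ((1 + fps_X) oo p)"
    by (rule fps_inverse_compose) (simp_all add: p0)
  also have "(1 + fps_X) oo p = 1 + p" by (simp add: fps_compose_add_distrib p0)
  also have "inverse (1 + p) = 1 - fps_X"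
    by (rule fps_inverse_unique) (unfold p_def, use E1 in algebra)
  finally have ip: "inverse (1 + fps_X) oo p = 1 - fps_X" .
  have H': "H = (fps_X + fps_X^2 * Mfps) * inverse (1 + fps_X)"
    unfolding H_def by (simp add: fps_divide_unit)
  have G': "G = (Mfps - fps_X * Mfps - fps_X^2 * Mfps^2) * inverse (1 + fps_X)"
    unfolding G_def by (simp add: fps_divide_unit)
  have "H oo p = (p + p^2 * m) * (1 - fps_X)"
    unfolding H' using ip
    by (simp add: m_def fps_compose_add_distrib fps_compose_mult_distrib[OF p0]
        fps_compose_power[OF p0, symmetric] p0)
  also have "\<dots> = fps_X * Cfps" unfolding mc c_def p_def using C_rec E1 by algebra
  finally have Hp: "H oo p = fps_X * Cfps" .
  have "G oo p = (m - p * m - p^2 * m^2) * (1 - fps_X)"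
    unfolding G' using ip
    by (simp add: m_def fps_compose_add_distrib fps_compose_sub_distrib fps_compose_mult_distrib[OF p0]
        fps_compose_power[OF p0, symmetric] p0)
  also have "\<dots> = 1 - fps_X" using m_rec by algebra
  finally have Gp: "G oo p = 1 - fps_X" .
  show ?thesis unfolding Pasc mmult_riordan[OF p0] Hp Gp E1 ..
qed


lemma Winv: "1 / (1 - 2 * fps_X * Cfps) = Wfps"
proof -
  have "1 / (1 - 2 * fps_X * Cfps) = inverse Tfps"
    using cat(2) T0 by (simp add: fps_divide_unit)
  also have "\<dots> = Wfps" by (rule fps_inverse_unique) (metis WT mult.commute)
  finally show ?thesis .
qed

lemma Winv2: "(1 / (1 - 2 * fps_X)) oo (fps_X * Cfps) = Wfps"
proof -
  have u0: "(fps_X * Cfps) $ 0 = 0" by simp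
  have "(1 / (1 - 2 * fps_X)) oo (fps_X * Cfps) = inverse (1 - 2 * fps_X) oo (fps_X * Cfps)"
    by (simp add: fps_divide_unit)
  also have "\<dots> = inverse ((1 - 2 * fps_X) oo (fps_X * Cfps))"
    by (rule fps_inverse_compose) (simp_all add: u0)
  also have "(1 - 2 * fps_X) oo (fps_X * Cfps) = 1 - 2 * fps_X * Cfps"
    by (simp add: fps_compose_sub_distrib fps_compose_mult_distrib[OF u0] mult.assoc)
  also have "inverse \<dots> = Wfps" using Winv cat(2) T0 by (simp add: fps_divide_unit)
  finally show ?thesis .
qed

lemma D_part:
  "mmult (mmult Dmat (minv FS)) Dmat = riordan 1 (fps_X * Cfps) \<and>
   mmult (mmult Dmat (minv LS)) Dmat = riordan Wfps (fps_X * Cfps)"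
proof -
  define u where "u = fps_X * Cfps"
  have u0: "u $ 0 = 0" by (simp add: u_def)
  have nX0: "(- fps_X :: real fps) $ 0 = 0" by simp
  define s where "s = - (u oo - fps_X)"
  have s0: "s $ 0 = 0" by (simp add: s_def u0)
  have XX: "(- fps_X :: real fps) oo - fps_X = fps_X"
    by (simp add: fps_compose_uminus)
  have suX: "s oo - fps_X = - u"
    unfolding s_def fps_compose_uminus fps_compose_assoc[OF nX0 nX0, symmetric] XX by simp
  have v: "(u oo - fps_X) - (u oo - fps_X)^2 = - fps_X"
    using arg_cong[OF cat(1), of "\<lambda>z. z oo - fps_X"]
    by (simp add: u_def fps_compose_sub_distrib fps_compose_power[OF nX0, symmetric]
        fps_compose_uminus)
  have fs: "(fps_X * (1 + fps_X)) oo s = fps_X"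
  proof -
    have "(fps_X * (1 + fps_X)) oo s = s * (1 + s)"
      by (simp add: fps_compose_mult_distrib[OF s0] fps_compose_add_distrib s0)
    also have "\<dots> = fps_X" unfolding s_def using v by algebra
    finally show ?thesis .
  qed
  have f0: "(fps_X * (1 + fps_X) :: real fps) $ 0 = 0" by simp
  have f1: "(fps_X * (1 + fps_X) :: real fps) $ 1 \<noteq> 0" by (simp add: fps_mult_nth)
  have iFS: "minv FS = riordan 1 s"
    unfolding FS_def using minv_riordan[OF f0 f1 _ s0 fs, of 1] by simp
  have g0: "(1 + 2 * fps_X :: real fps) $ 0 \<noteq> 0" by simp
  have iLS: "minv LS = riordan (inverse (1 + 2 * s)) s"
    unfolding LS_def using minv_riordan[OF f0 f1 g0 s0 fs]
    by (simp add: fps_compose_add_distrib fps_compose_mult_distrib[OF s0] s0)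
  have su0: "(s oo - fps_X) $ 0 = 0" by (simp add: s0)
  have mu0: "(- u) $ 0 = 0" by (simp add: u0)
  have A: "mmult (mmult Dmat (minv FS)) Dmat = riordan 1 u"
    unfolding iFS Dmat_def mmult_riordan[OF nX0] suX mmult_riordan[OF mu0]
    by (simp add: fps_compose_uminus u0)
  have h: "inverse (1 + 2 * s) oo - fps_X = Wfps"
  proof -
    have "inverse (1 + 2 * s) oo - fps_X = inverse ((1 + 2 * s) oo - fps_X)"
      by (rule fps_inverse_compose) (simp_all add: s0)
    also have "(1 + 2 * s) oo - fps_X = 1 - 2 * u"
      by (simp add: fps_compose_add_distrib fps_compose_mult_distrib[OF nX0] suX)
    also have "inverse (1 - 2 * u) = Wfps" using Winv cat(2) T0
      by (simp add: fps_divide_unit u_def mult.assoc)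
    finally show ?thesis .
  qed
  have B: "mmult (mmult Dmat (minv LS)) Dmat = riordan Wfps u"
    unfolding iLS Dmat_def mmult_riordan[OF nX0] suX mmult_riordan[OF mu0] h
    by (simp add: fps_compose_uminus u0)
  show ?thesis using A B by (simp add: u_def)
qed

theorem lemma3p1:
  defines "G \<equiv> (Mfps - fps_X * Mfps - fps_X^2 * Mfps^2) / (1 + fps_X)"
      and "H \<equiv> (fps_X + fps_X^2 * Mfps) / (1 + fps_X)"
  shows
   "(mmult (mmult Dmat (minv FS)) Dmat = riordan 1 (fps_X * Cfps) \<and>
    riordan 1 (fps_X * Cfps) = mmult Pascal (riordan G H)) \<and>
   (mmult (mmult Dmat (minv LS)) Dmat = riordan (1 / (1 - 2 * fps_X * Cfps)) (fps_X * Cfps) \<and>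
    riordan (1 / (1 - 2 * fps_X * Cfps)) (fps_X * Cfps)
      = mmult (riordan Wfps fps_X) (mmult Pascal (riordan G H))) \<and>
   (mmult (mmult Dmat (minv LS)) Dmat
      = mmult (riordan (1 / (1 - 2 * fps_X * Cfps)) fps_X) (mmult (mmult Dmat (minv FS)) Dmat) \<and>
    mmult (riordan (1 / (1 - 2 * fps_X * Cfps)) fps_X) (mmult (mmult Dmat (minv FS)) Dmat)
      = mmult (riordan Wfps fps_X) (mmult (mmult Dmat (minv FS)) Dmat) \<and>
    mmult (riordan Wfps fps_X) (mmult (mmult Dmat (minv FS)) Dmat)
      = mmult (mmult (mmult Dmat (minv FS)) Dmat) (riordan (1 / (1 - 2 * fps_X)) fps_X))"
  proof -
  have P: "riordan 1 (fps_X * Cfps) = mmult Pascal (riordan G H)"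
    unfolding G_def H_def by (rule pascal_part)
  have X0: "(fps_X :: real fps) $ 0 = 0" by simp
  have u0: "(fps_X * Cfps) $ 0 = 0" by simp
  have e1: "mmult (riordan Wfps fps_X) (riordan 1 (fps_X * Cfps)) = riordan Wfps (fps_X * Cfps)"
    by (simp add: mmult_riordan[OF X0])
  have e3: "mmult (riordan 1 (fps_X * Cfps)) (riordan (1 / (1 - 2 * fps_X)) fps_X)
      = riordan Wfps (fps_X * Cfps)"
    by (simp add: mmult_riordan[OF u0] Winv2 u0)
  show ?thesis using D_part by (simp add: P[symmetric] Winv e1 e3)
qed

end
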